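(* Consider the online optimization problem with multi-step memory cost described in the context. Assume that for every $t$ the hitting cost $f(\cdot,y_t)$ is $\alpha$-polyhedral for some $\alpha>0$, and let $\beta=\sum_{i=1}^q\|C_i\|$, where $\|C_i\|$ is the matrix norm induced by the $l_p$ vector norm. Let the expert $\pi$ be the algorithm Robust, which chooses $x_t^\pi=\arg\min_{x\in\mathcal X}f(x,y_t)$ for every $t=1,\dots,T$. Then for any $\lambda\ge1$ and $B\ge0$, ERL (with parameters $\lambda,B$, expert Robust and arbitrary proposed actions) satisfies, for every input $\bm s$, $$\mathrm{cost}(\mathrm{ERL},\bm s)\le \lambda\max\!\left(\tfrac{\beta+1}{\alpha},1\right)\mathrm{cost}(\mathrm{OPT},\bm s)+B.$$
   Context: Problem: Let $\mathcal X\subseteq\mathbb R^d$, $\mathcal Y\subseteq\mathbb R^m$, $f:\mathcal X\times\mathcal Y\to[0,\infty)$, $\|\cdot\|$ the $l_p$ norm on $\mathbb R^d$ ($p\ge1$), a memory length $q\ge1$ and matrices $C_1,\dots,C_q\in\mathbb R^{d\times d}$. An instance $\bm s$ consists of given initial actions $x_{1-q},\dots,x_0\in\mathcal X$ (shared by all algorithms) and contexts $y_1,\dots,y_T\in\mathcal Y$. At step $t$ the context $y_t$ is revealed and an online algorithm irrevocably chooses $x_t\in\mathcal X$. The memory cost is $d(x_t,x_{t-q:t-1})=\|x_t-\sum_{i=1}^q C_ix_{t-i}\|$; for a sequence, $\mathrm{cost}(x_{1:t})=\sum_{\tau=1}^t f(x_\tau,y_\tau)+d(x_\tau,x_{\tau-q:\tau-1})$,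 and the total cost of an algorithm is $\mathrm{cost}(x_{1:T})$ of its actions. $\mathrm{cost}(\mathrm{OPT},\bm s)$ is the infimum of the total cost over all $x_1,\dots,x_T\in\mathcal X$ (offline, all contexts known). $\alpha$-polyhedral: $f(\cdot,y)$ has a unique minimizer $x^*\in\mathcal X$ and $f(x,y)-f(x^*,y)\ge\alpha\|x-x^*\|$ for all $x\in\mathcal X$. ERL (multi-step): given $\lambda\ge1$, $B\ge0$, an expert online algorithm $\pi$ running independently with actions $x_t^\pi$ (and $x_t^\pi=x_t$ for the initial indices $t\le0$), and arbitrary proposed actions $\tilde x_t\in\mathbb R^d$. At step $t$, ERL sets $x_t$ to a minimizer of $\tfrac12\|x-\tilde x_t\|^2$ over $x\in\mathcal X$ subject to $$\mathrm{cost}(x_{1:t-1})+f(x,y_t)+d(x,x_{t-q:t-1})+G(x,x_{t-q:t-1},x^\pi_{t-q:t})\le\lambda\,\mathrm{cost}(x^\pi_{1:t})+B,$$ where $x_{1:t-1}$ are ERL's previous actions and $$G(x,x_{t-q:t-1},x^\pi_{t-q:t})=\sum_{k=1}^{\min(q,T-t)}\Big\|C_kx+\sum_{i=1}^{q-k}C_{k+i}x_{t-i}-\sum_{i=0}^{q-k}C_{k+i}x^\pi_{t-i}\Big\|.$$ *)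

theory Defs
  imports "HOL-Analysis.Analysis"
begin

definition lp_norm :: "real \<Rightarrow> real^'d \<Rightarrow> real" where
  "lp_norm p v = (\<Sum>i\<in>UNIV. \<bar>v $ i\<bar> powr p) powr (1 / p)"

definition lp_opnorm :: "real \<Rightarrow> real^'d^'d \<Rightarrow> real" where
  "lp_opnorm p A = Sup {lp_norm p (A *v v) | v. lp_norm p v \<le> 1}"

definition mem_cost :: "real \<Rightarrow> (nat \<Rightarrow> real^'d^'d) \<Rightarrow> nat \<Rightarrow> (int \<Rightarrow> real^'d) \<Rightarrow> int \<Rightarrow> real^'d \<Rightarrow> real" where
  "mem_cost p C q x t v = lp_norm p (v - (\<Sum>i = 1..q. C i *v x (t - int i)))"

definition seq_cost :: "(real^'d \<Rightarrow> 'y \<Rightarrow> real) \<Rightarrow> real \<Rightarrow> (nat \<Rightarrow> real^'d^'d) \<Rightarrow> nat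
    \<Rightarrow> (int \<Rightarrow> real^'d) \<Rightarrow> (int \<Rightarrow> 'y) \<Rightarrow> int \<Rightarrow> real" where
  "seq_cost f p C q x y t = (\<Sum>\<tau> = 1..t. f (x \<tau>) (y \<tau>) + mem_cost p C q x \<tau> (x \<tau>))"

definition is_minimizer :: "(real^'d) set \<Rightarrow> (real^'d \<Rightarrow> 'y \<Rightarrow> real) \<Rightarrow> 'y \<Rightarrow> real^'d \<Rightarrow> bool" where
  "is_minimizer X f y xs \<longleftrightarrow> xs \<in> X \<and> (\<forall>x\<in>X. f xs y \<le> f x y)"

definition polyhedral :: "(real^'d) set \<Rightarrow> (real^'d \<Rightarrow> 'y \<Rightarrow> real) \<Rightarrow> real \<Rightarrow> real \<Rightarrow> 'y \<Rightarrow> bool" where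
  "polyhedral X f p \<alpha> y \<longleftrightarrow> (\<exists>!xs. is_minimizer X f y xs) \<and>
     (\<forall>xs x. is_minimizer X f y xs \<longrightarrow> x \<in> X \<longrightarrow> f x y - f xs y \<ge> \<alpha> * lp_norm p (x - xs))"

definition robust :: "(real^'d) set \<Rightarrow> (real^'d \<Rightarrow> 'y \<Rightarrow> real) \<Rightarrow> (int \<Rightarrow> 'y) \<Rightarrow> (int \<Rightarrow> real^'d) \<Rightarrow> int \<Rightarrow> real^'d" where
  "robust X f y x0 t = (if t \<le> 0 then x0 t else (THE xs. is_minimizer X f (y t) xs))"

definition G_term :: "real \<Rightarrow> (nat \<Rightarrow> real^'d^'d) \<Rightarrow> nat \<Rightarrow> nat \<Rightarrow> (int \<Rightarrow> real^'d) \<Rightarrow> (int \<Rightarrow> real^'d)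
    \<Rightarrow> int \<Rightarrow> real^'d \<Rightarrow> real" where
  "G_term p C q T x xpi t v = (\<Sum>k = 1..nat (min (int q) (int T - t)).
     lp_norm p (C k *v v + (\<Sum>i = 1..q - k. C (k + i) *v x (t - int i))
                         - (\<Sum>i = 0..q - k. C (k + i) *v xpi (t - int i))))"

definition erl_feasible :: "(real^'d) set \<Rightarrow> (real^'d \<Rightarrow> 'y \<Rightarrow> real) \<Rightarrow> real \<Rightarrow> (nat \<Rightarrow> real^'d^'d) \<Rightarrow> nat \<Rightarrow> nat
    \<Rightarrow> real \<Rightarrow> real \<Rightarrow> (int \<Rightarrow> real^'d) \<Rightarrow> (int \<Rightarrow> 'y) \<Rightarrow> (int \<Rightarrow> real^'d) \<Rightarrow> int \<Rightarrow> real^'d \<Rightarrow> bool" where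
  "erl_feasible X f p C q T lam B xpi y x t v \<longleftrightarrow> v \<in> X \<and>
     seq_cost f p C q x y (t - 1) + f v (y t) + mem_cost p C q x t v + G_term p C q T x xpi t v
       \<le> lam * seq_cost f p C q xpi y t + B"

text \<open>x is a run of ERL (parameters lambda, B, expert actions xpi, proposed actions xt)
  from initial actions x0 on contexts y: at every step t, x_t minimizes
  1/2 ||v - xt_t||^2 over the feasible v.\<close>
definition erl_run :: "(real^'d) set \<Rightarrow> (real^'d \<Rightarrow> 'y \<Rightarrow> real) \<Rightarrow> real \<Rightarrow> (nat \<Rightarrow> real^'d^'d) \<Rightarrow> nat \<Rightarrow> nat
    \<Rightarrow> real \<Rightarrow> real \<Rightarrow> (int \<Rightarrow> real^'d) \<Rightarrow> (int \<Rightarrow> real^'d) \<Rightarrow> (int \<Rightarrow> 'y) \<Rightarrow> (int \<Rightarrow> real^'d)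
    \<Rightarrow> (int \<Rightarrow> real^'d) \<Rightarrow> bool" where
  "erl_run X f p C q T lam B xpi xt y x0 x \<longleftrightarrow>
     (\<forall>t. 1 - int q \<le> t \<and> t \<le> 0 \<longrightarrow> x t = x0 t) \<and>
     (\<forall>t\<in>{1..int T}. erl_feasible X f p C q T lam B xpi y x t (x t) \<and>
        (\<forall>v. erl_feasible X f p C q T lam B xpi y x t v \<longrightarrow>
              (1/2) * (lp_norm p (x t - xt t))\<^sup>2 \<le> (1/2) * (lp_norm p (v - xt t))\<^sup>2))"

definition opt_cost :: "(real^'d) set \<Rightarrow> (real^'d \<Rightarrow> 'y \<Rightarrow> real) \<Rightarrow> real \<Rightarrow> (nat \<Rightarrow> real^'d^'d) \<Rightarrow> nat \<Rightarrow> nat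
    \<Rightarrow> (int \<Rightarrow> 'y) \<Rightarrow> (int \<Rightarrow> real^'d) \<Rightarrow> real" where
  "opt_cost X f p C q T y x0 = Inf {seq_cost f p C q z y (int T) | z.
     (\<forall>t\<in>{1..int T}. z t \<in> X) \<and> (\<forall>t. 1 - int q \<le> t \<and> t \<le> 0 \<longrightarrow> z t = x0 t)}"

end

theory Submission
  imports Defs
begin


lemma lp_norm_nonneg: "lp_norm p v \<ge> 0"
  unfolding lp_norm_def by simp

lemma lp_norm_zero_iff:
  assumes "p \<ge> 1" shows "lp_norm p v = 0 \<longleftrightarrow> v = 0"
proof
  assume h: "lp_norm p v = 0"
  have "(\<Sum>i\<in>UNIV. \<bar>v $ i\<bar> powr p) = 0"
    using h unfolding lp_norm_def by simp
  then have "\<forall>i\<in>UNIV. \<bar>v $ i\<bar> powr p = 0"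
    by (subst (asm) sum_nonneg_eq_0_iff) auto
  then show "v = 0" by (simp add: vec_eq_iff)
next
  assume "v = 0" then show "lp_norm p v = 0"
    using assms unfolding lp_norm_def by simp
qed

lemma lp_norm_scale:
  assumes "p \<ge> 1" shows "lp_norm p (c *\<^sub>R v) = \<bar>c\<bar> * lp_norm p v"
proof -
  have "(\<Sum>i\<in>UNIV. \<bar>(c *\<^sub>R v) $ i\<bar> powr p) = \<bar>c\<bar> powr p * (\<Sum>i\<in>UNIV. \<bar>v $ i\<bar> powr p)"
    by (simp add: sum_distrib_left abs_mult powr_mult)
  then have "lp_norm p (c *\<^sub>R v) = (\<bar>c\<bar> powr p) powr (1/p) * (\<Sum>i\<in>UNIV. \<bar>v $ i\<bar> powr p) powr (1/p)"
    unfolding lp_norm_def by (simp add: powr_mult sum_nonneg)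
  also have "(\<bar>c\<bar> powr p) powr (1/p) = \<bar>c\<bar>"
    using assms by (simp add: powr_powr)
  finally show ?thesis unfolding lp_norm_def .
qed

lemma lp_norm_comp:
  assumes "p \<ge> 1" shows "\<bar>v $ i\<bar> \<le> lp_norm p v"
proof -
  have "\<bar>v $ i\<bar> powr p \<le> (\<Sum>i\<in>UNIV. \<bar>v $ i\<bar> powr p)"
    by (rule member_le_sum) auto
  then have "(\<bar>v $ i\<bar> powr p) powr (1/p) \<le> (\<Sum>i\<in>UNIV. \<bar>v $ i\<bar> powr p) powr (1/p)"
    using assms by (intro powr_mono2) auto
  then show ?thesis using assms unfolding lp_norm_def by (simp add: powr_powr)
qed

lemma lp_norm_bound:
  fixes v :: "real^'d"
  assumes "p \<ge> 1" and "\<And>i. \<bar>v $ i\<bar> \<le> K"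
  shows "lp_norm p v \<le> (real CARD('d) * K powr p) powr (1/p)"
proof -
  have "(\<Sum>i\<in>UNIV. \<bar>v $ i\<bar> powr p) \<le> (\<Sum>i\<in>(UNIV::'d set). K powr p)"
    using assms by (intro sum_mono powr_mono2) auto
  then show ?thesis unfolding lp_norm_def using assms
    by (intro powr_mono2) (auto intro: sum_nonneg)
qed

lemma scalar_convex:
  fixes a b u :: real
  assumes p: "p \<ge> 1" and "a \<ge> 0" "b \<ge> 0" "0 \<le> u" "u \<le> 1"
  shows "(u * a + (1 - u) * b) powr p \<le> u * a powr p + (1 - u) * b powr p"
proof -
  have key: "(w * c) powr p \<le> w * c powr p" if "0 \<le> w" "w \<le> 1" "c \<ge> 0" for w c :: real
  proof (cases "w = 0")
    case False
    then have "w powr p \<le> w" using that p powr_le_one_le by auto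
    then show ?thesis using that by (simp add: powr_mult mult_right_mono)
  qed (use p in simp)
  show ?thesis
  proof (cases "a = 0 \<or> b = 0")
    case True
    then show ?thesis using key[of u a] key[of "1-u" b] assms by auto
  next
    case False
    then have "a > 0" "b > 0" using assms by auto
    have "((1 - (1-u)) *\<^sub>R a + (1-u) *\<^sub>R b) powr p \<le> (1 - (1-u)) * a powr p + (1-u) * b powr p"
      by (rule convex_onD[OF powr_convex[OF p]]) (use assms \<open>a > 0\<close> \<open>b > 0\<close> in auto)
    then show ?thesis by simp
  qed
qed

lemma abs_comb:
  fixes w x y :: real
  assumes "0 \<le> w" "w \<le> 1"
  shows "\<bar>w * x + (1 - w) * y\<bar> \<le> w * \<bar>x\<bar> + (1 - w) * \<bar>y\<bar>"
proof -
  have "\<bar>w * x + (1 - w) * y\<bar> \<le> \<bar>w * x\<bar> + \<bar>(1 - w) * y\<bar>" by (rule abs_triangle_ineq)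
  also have "\<dots> = w * \<bar>x\<bar> + (1 - w) * \<bar>y\<bar>" using assms by (simp add: abs_mult)
  finally show ?thesis .
qed

lemma lp_norm_triangle:
  fixes u v :: "real^'d"
  assumes p: "p \<ge> 1" shows "lp_norm p (u + v) \<le> lp_norm p u + lp_norm p v"
proof (cases "u = 0 \<or> v = 0")
  case True then show ?thesis using lp_norm_nonneg[of p u] lp_norm_nonneg[of p v] by (elim disjE) simp_all
next
  case False
  define a where "a = lp_norm p u"
  define b where "b = lp_norm p v"
  have a: "a > 0" using False lp_norm_zero_iff[OF p, of u] lp_norm_nonneg[of p u] a_def by linarith
  have b: "b > 0" using False lp_norm_zero_iff[OF p, of v] lp_norm_nonneg[of p v] b_def by linarith
  define phi where "phi w = (\<Sum>i\<in>UNIV. \<bar>w $ i\<bar> powr p)" for w :: "real^'d"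
  have phin: "phi w \<ge> 0" for w unfolding phi_def by (simp add: sum_nonneg)
  have norm_phi: "lp_norm p w = phi w powr (1/p)" for w unfolding phi_def lp_norm_def ..
  have phi_norm: "phi w = lp_norm p w powr p" for w
    using p phin[of w] by (simp add: norm_phi powr_powr)
  have pu: "phi ((1/a) *\<^sub>R u) = 1"
    using a p by (simp add: phi_norm lp_norm_scale a_def)
  have pv: "phi ((1/b) *\<^sub>R v) = 1"
    using b p by (simp add: phi_norm lp_norm_scale b_def)
  define w where "w = a / (a + b)"
  have w01: "0 \<le> w" "w \<le> 1" using a b by (auto simp: w_def)
  have eq: "(1/(a+b)) *\<^sub>R (u + v) = w *\<^sub>R ((1/a) *\<^sub>R u) + (1 - w) *\<^sub>R ((1/b) *\<^sub>R v)"
    using a b by (simp add: w_def field_simps vec_eq_iff)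
  have "phi ((1/(a+b)) *\<^sub>R (u + v)) \<le> w * phi ((1/a) *\<^sub>R u) + (1 - w) * phi ((1/b) *\<^sub>R v)"
  proof -
    have "phi ((1/(a+b)) *\<^sub>R (u + v)) = (\<Sum>i\<in>UNIV. \<bar>w * ((1/a) *\<^sub>R u) $ i + (1 - w) * ((1/b) *\<^sub>R v) $ i\<bar> powr p)"
      unfolding eq phi_def by simp
    also have "\<dots> \<le> (\<Sum>i\<in>UNIV. (w * \<bar>((1/a) *\<^sub>R u) $ i\<bar> + (1 - w) * \<bar>((1/b) *\<^sub>R v) $ i\<bar>) powr p)"
    proof (intro sum_mono powr_mono2)
      fix i
      show "\<bar>w * ((1/a) *\<^sub>R u) $ i + (1 - w) * ((1/b) *\<^sub>R v) $ i\<bar> \<le> w * \<bar>((1/a) *\<^sub>R u) $ i\<bar> + (1 - w) * \<bar>((1/b) *\<^sub>R v) $ i\<bar>"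
        by (rule abs_comb) (use w01 in auto)
    qed (use p in auto)
    also have "\<dots> \<le> (\<Sum>i\<in>UNIV. w * \<bar>((1/a) *\<^sub>R u) $ i\<bar> powr p + (1 - w) * \<bar>((1/b) *\<^sub>R v) $ i\<bar> powr p)"
      by (intro sum_mono scalar_convex) (use p w01 in auto)
    also have "\<dots> = w * phi ((1/a) *\<^sub>R u) + (1 - w) * phi ((1/b) *\<^sub>R v)"
      unfolding phi_def by (simp add: sum.distrib sum_distrib_left)
    finally show ?thesis .
  qed
  then have le1: "phi ((1/(a+b)) *\<^sub>R (u + v)) \<le> 1" using pu pv by simp
  have "lp_norm p ((1/(a+b)) *\<^sub>R (u + v)) \<le> 1"
    using le1 phin p by (simp add: norm_phi powr_le1)
  then have "lp_norm p (u + v) / (a + b) \<le> 1"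
    using a b p by (simp add: lp_norm_scale)
  then show ?thesis using a b by (simp add: a_def b_def divide_le_eq)
qed



lemma opnorm_bdd:
  fixes A :: "real^'d^'d"
  assumes p: "p \<ge> 1"
  shows "bdd_above {lp_norm p (A *v v) | v. lp_norm p v \<le> 1}"
proof -
  define K where "K = (\<Sum>i\<in>UNIV. \<Sum>j\<in>UNIV. \<bar>A $ i $ j\<bar>)"
  have "lp_norm p (A *v v) \<le> (real CARD('d) * K powr p) powr (1/p)" if v: "lp_norm p v \<le> 1" for v
  proof (rule lp_norm_bound[OF p])
    fix i
    have "\<bar>(A *v v) $ i\<bar> = \<bar>\<Sum>j\<in>UNIV. A $ i $ j * v $ j\<bar>"
      by (simp add: matrix_vector_mult_def)
    also have "\<dots> \<le> (\<Sum>j\<in>UNIV. \<bar>A $ i $ j * v $ j\<bar>)" by (rule sum_abs)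
    also have "\<dots> \<le> (\<Sum>j\<in>UNIV. \<bar>A $ i $ j\<bar>)"
    proof (rule sum_mono)
      fix j
      have "\<bar>v $ j\<bar> \<le> 1" using lp_norm_comp[OF p, of v j] v by linarith
      then show "\<bar>A $ i $ j * v $ j\<bar> \<le> \<bar>A $ i $ j\<bar>"
        by (simp add: abs_mult mult_left_le)
    qed
    also have "\<dots> \<le> K" unfolding K_def
      by (rule member_le_sum[where f="\<lambda>i. \<Sum>j\<in>UNIV. \<bar>A $ i $ j\<bar>"]) (auto intro: sum_nonneg)
    finally show "\<bar>(A *v v) $ i\<bar> \<le> K" .
  qed
  then show ?thesis by (auto simp: bdd_above_def)
qed

lemma opnorm_nonneg:
  assumes p: "p \<ge> 1" shows "lp_opnorm p (A::real^'d^'d) \<ge> 0"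
proof -
  have "lp_norm p (A *v 0) \<in> {lp_norm p (A *v v) | v. lp_norm p v \<le> 1}"
    using lp_norm_zero_iff[OF p, of "0::real^'d"] by (intro CollectI exI[of _ 0]) simp
  then have "lp_norm p (A *v 0) \<le> lp_opnorm p A"
    unfolding lp_opnorm_def by (rule cSup_upper[OF _ opnorm_bdd[OF p]])
  then show ?thesis using lp_norm_nonneg[of p "A *v 0"] by linarith
qed

lemma opnorm_le:
  fixes A :: "real^'d^'d"
  assumes p: "p \<ge> 1" shows "lp_norm p (A *v v) \<le> lp_opnorm p A * lp_norm p v"
proof (cases "v = 0")
  case True then show ?thesis using lp_norm_zero_iff[OF p, of "0::real^'d"] by simp
next
  case False
  define n where "n = lp_norm p v"
  have n: "n > 0" using False lp_norm_zero_iff[OF p, of v] lp_norm_nonneg[of p v] n_def by linarith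
  have "lp_norm p ((1/n) *\<^sub>R v) = 1" using n p by (simp add: lp_norm_scale n_def)
  then have "lp_norm p (A *v ((1/n) *\<^sub>R v)) \<in> {lp_norm p (A *v v) | v. lp_norm p v \<le> 1}"
    by force
  then have "lp_norm p (A *v ((1/n) *\<^sub>R v)) \<le> lp_opnorm p A"
    unfolding lp_opnorm_def by (rule cSup_upper[OF _ opnorm_bdd[OF p]])
  then have "lp_norm p (A *v v) / n \<le> lp_opnorm p A"
    using n p by (simp add: matrix_vector_mult_scaleR lp_norm_scale)
  then show ?thesis using n by (simp add: n_def divide_le_eq mult.commute)
qed



lemma lp_norm_neg: "lp_norm p (- v) = lp_norm p v"
  unfolding lp_norm_def by simp

lemma lp_norm_sum:
  fixes g :: "'i \<Rightarrow> real^'d"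
  assumes p: "p \<ge> 1" and "finite S"
  shows "lp_norm p (\<Sum>i\<in>S. g i) \<le> (\<Sum>i\<in>S. lp_norm p (g i))"
  using assms(2)
proof (induction S rule: finite_induct)
  case empty then show ?case using lp_norm_zero_iff[OF p, of "0::real^'d"] by simp
next
  case (insert a S)
  then show ?case using lp_norm_triangle[OF p, of "g a" "sum g S"] by simp
qed

lemma sum_int_last:
  fixes g :: "int \<Rightarrow> real"
  assumes "t \<ge> 1"
  shows "(\<Sum>\<tau> = 1..t. g \<tau>) = (\<Sum>\<tau> = 1..t - 1. g \<tau>) + g t"
proof -
  have "{1..t} = insert t {1..t-1}" using assms by auto
  then show ?thesis by simp
qed

lemma shift_sum:
  fixes n :: "int \<Rightarrow> real" and i q :: nat and T :: int
  assumes nn: "\<And>t. n t \<ge> 0" and n0: "\<And>t. 1 - int q \<le> t \<Longrightarrow> t \<le> 0 \<Longrightarrow> n t = 0"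
    and i: "i \<le> q"
  shows "(\<Sum>\<tau> = 1..T. n (\<tau> - int i)) \<le> (\<Sum>\<tau> = 1..T. n \<tau>)"
proof -
  define A where "A = (\<lambda>\<tau>. \<tau> - int i) ` {1..T}"
  have inj: "inj_on (\<lambda>\<tau>. \<tau> - int i) {1..T}" by (auto simp: inj_on_def)
  have "(\<Sum>\<tau> = 1..T. n (\<tau> - int i)) = (\<Sum>s\<in>A. n s)"
    unfolding A_def using sum.reindex[OF inj, of n] by (simp add: comp_def)
  also have "\<dots> = (\<Sum>s\<in>A \<inter> {1..T}. n s)"
  proof (rule sum.mono_neutral_right)
    show "finite A" unfolding A_def by simp
    show "A \<inter> {1..T} \<subseteq> A" by blast
    show "\<forall>s\<in>A - A \<inter> {1..T}. n s = 0"
    proof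
      fix s assume s: "s \<in> A - A \<inter> {1..T}"
      then have sn: "s \<notin> {1..T}" by blast
      from s obtain \<tau> where "\<tau> \<in> {1..T}" "s = \<tau> - int i" unfolding A_def by blast
      then show "n s = 0" using i sn by (intro n0) auto
    qed
  qed
  also have "\<dots> \<le> (\<Sum>s\<in>{1..T}. n s)"
    by (rule sum_mono2) (use nn in auto)
  finally show ?thesis .
qed



theorem corollary2:
  fixes X :: "(real^'d) set" and Y :: "(real^'m) set"
    and f :: "real^'d \<Rightarrow> real^'m \<Rightarrow> real"
    and p :: real and q T :: nat and C :: "nat \<Rightarrow> real^'d^'d"
    and x0 xt x :: "int \<Rightarrow> real^'d" and y :: "int \<Rightarrow> real^'m"
    and \<alpha> lam B :: real
  assumes p: "p \<ge> 1" and q: "q \<ge> 1"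
    and f_nonneg: "\<forall>v\<in>X. \<forall>w\<in>Y. f v w \<ge> 0"
    and init: "\<forall>t. 1 - int q \<le> t \<and> t \<le> 0 \<longrightarrow> x0 t \<in> X"
    and ctx: "\<forall>t\<in>{1..int T}. y t \<in> Y"
    and alpha: "\<alpha> > 0"
    and poly: "\<forall>t\<in>{1..int T}. polyhedral X f p \<alpha> (y t)"
    and lam: "lam \<ge> 1" and B: "B \<ge> 0"
    and run: "erl_run X f p C q T lam B (robust X f y x0) xt y x0 x"
  shows "seq_cost f p C q x y (int T)
     \<le> lam * max (((\<Sum>i = 1..q. lp_opnorm p (C i)) + 1) / \<alpha>) 1 * opt_cost X f p C q T y x0 + B"
proof -
  define xpi where "xpi = robust X f y x0"
  define opn where "opn i = lp_opnorm p (C i)" for i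
  define beta where "beta = (\<Sum>i = 1..q. opn i)"
  define c where "c = (beta + 1) / \<alpha>"
  define M where "M = max c 1"
  have opn_nn: "opn i \<ge> 0" for i unfolding opn_def by (rule opnorm_nonneg[OF p])
  have beta_nn: "beta \<ge> 0" unfolding beta_def by (simp add: sum_nonneg opn_nn)
  have M1: "M \<ge> 1" "c \<le> M" unfolding M_def by auto
  have xpi_min: "is_minimizer X f (y t) (xpi t)" if t: "t \<in> {1..int T}" for t
  proof -
    have "\<exists>!xs. is_minimizer X f (y t) xs" using poly t unfolding polyhedral_def by blast
    then have "is_minimizer X f (y t) (THE xs. is_minimizer X f (y t) xs)" by (rule theI')
    then show ?thesis using t unfolding xpi_def robust_def by simp
  qed
  have xpi_init: "xpi t = x0 t" if "t \<le> 0" for t using that unfolding xpi_def robust_def by simp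
  have ERL: "seq_cost f p C q x y (int T) \<le> lam * seq_cost f p C q xpi y (int T) + B"
  proof (cases "T = 0")
    case True then show ?thesis using B by (simp add: seq_cost_def)
  next
    case False
    then have T1: "int T \<ge> 1" by simp
    have feas: "erl_feasible X f p C q T lam B xpi y x (int T) (x (int T))"
      using run T1 unfolding erl_run_def xpi_def by auto
    have G: "G_term p C q T x xpi (int T) (x (int T)) \<ge> 0"
      unfolding G_term_def by (rule sum_nonneg) (simp add: lp_norm_nonneg)
    have "seq_cost f p C q x y (int T) = seq_cost f p C q x y (int T - 1) + f (x (int T)) (y (int T))
        + mem_cost p C q x (int T) (x (int T))"
      unfolding seq_cost_def using sum_int_last[OF T1] by simp
    then show ?thesis using feas G unfolding erl_feasible_def by linarith
  qed
  have ROB: "seq_cost f p C q xpi y (int T) \<le> M * seq_cost f p C q z y (int T)"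
    if zX: "\<forall>t\<in>{1..int T}. z t \<in> X" and z0: "\<forall>t. 1 - int q \<le> t \<and> t \<le> 0 \<longrightarrow> z t = x0 t" for z
  proof -
    define e where "e t = z t - xpi t" for t
    define n where "n t = lp_norm p (e t)" for t
    have nn: "n t \<ge> 0" for t unfolding n_def by (rule lp_norm_nonneg)
    have n0: "n t = 0" if "1 - int q \<le> t" "t \<le> 0" for t
      using that z0 xpi_init lp_norm_zero_iff[OF p, of "0::real^'d"] unfolding n_def e_def by simp
    define N where "N = (\<Sum>\<tau> = 1..int T. n \<tau>)"
    define F where "F = (\<Sum>\<tau> = 1..int T. f (xpi \<tau>) (y \<tau>))"
    define Fz where "Fz = (\<Sum>\<tau> = 1..int T. f (z \<tau>) (y \<tau>))"
    define Mp where "Mp = (\<Sum>\<tau> = 1..int T. mem_cost p C q xpi \<tau> (xpi \<tau>))"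
    define Mz where "Mz = (\<Sum>\<tau> = 1..int T. mem_cost p C q z \<tau> (z \<tau>))"
    have F_nn: "F \<ge> 0" unfolding F_def
      using xpi_min ctx f_nonneg unfolding is_minimizer_def by (intro sum_nonneg) auto
    have Mz_nn: "Mz \<ge> 0" unfolding Mz_def mem_cost_def by (intro sum_nonneg) (simp add: lp_norm_nonneg)
    have pol: "\<alpha> * n \<tau> \<le> f (z \<tau>) (y \<tau>) - f (xpi \<tau>) (y \<tau>)" if t: "\<tau> \<in> {1..int T}" for \<tau>
    proof -
      have "polyhedral X f p \<alpha> (y \<tau>)" using poly t by blast
      then show ?thesis using xpi_min[OF t] zX t unfolding polyhedral_def n_def e_def by blast
    qed
    have "\<alpha> * N = (\<Sum>\<tau> = 1..int T. \<alpha> * n \<tau>)" by (simp add: N_def sum_distrib_left)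
    also have "\<dots> \<le> (\<Sum>\<tau> = 1..int T. f (z \<tau>) (y \<tau>) - f (xpi \<tau>) (y \<tau>))"
      by (rule sum_mono) (rule pol, simp)
    also have "\<dots> = Fz - F" by (simp add: Fz_def F_def sum_subtractf)
    finally have "\<alpha> * N \<le> Fz - F" .
    then have NFz: "N \<le> (Fz - F) / \<alpha>" using alpha by (simp add: field_simps)
    have "N \<ge> 0" unfolding N_def by (rule sum_nonneg) (rule nn)
    then have "\<alpha> * N \<ge> 0" using alpha by simp
    then have D: "Fz - F \<ge> 0" using \<open>\<alpha> * N \<le> Fz - F\<close> by linarith
    have memle: "mem_cost p C q xpi \<tau> (xpi \<tau>) \<le> mem_cost p C q z \<tau> (z \<tau>) + n \<tau> + (\<Sum>i = 1..q. opn i * n (\<tau> - int i))" for \<tau>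
    proof -
      define P where "P = (\<Sum>i = 1..q. C i *v xpi (\<tau> - int i))"
      define Z where "Z = (\<Sum>i = 1..q. C i *v z (\<tau> - int i))"
      define E where "E = (\<Sum>i = 1..q. C i *v e (\<tau> - int i))"
      have EZP: "E = Z - P" unfolding E_def Z_def P_def e_def
        by (simp add: matrix_vector_mult_diff_distrib sum_subtractf)
      have eq: "xpi \<tau> - P = (z \<tau> - Z) + (- e \<tau>) + E" unfolding EZP e_def by simp
      have "lp_norm p (xpi \<tau> - P) \<le> lp_norm p (z \<tau> - Z) + lp_norm p (- e \<tau>) + lp_norm p E"
      proof -
        have "lp_norm p ((z \<tau> - Z) + (- e \<tau>) + E) \<le> lp_norm p ((z \<tau> - Z) + (- e \<tau>)) + lp_norm p E"
          by (rule lp_norm_triangle[OF p])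
        moreover have "lp_norm p ((z \<tau> - Z) + (- e \<tau>)) \<le> lp_norm p (z \<tau> - Z) + lp_norm p (- e \<tau>)"
          by (rule lp_norm_triangle[OF p])
        ultimately show ?thesis unfolding eq by linarith
      qed
      moreover have "lp_norm p E \<le> (\<Sum>i = 1..q. opn i * n (\<tau> - int i))"
      proof -
        have "lp_norm p E \<le> (\<Sum>i = 1..q. lp_norm p (C i *v e (\<tau> - int i)))"
          unfolding E_def by (rule lp_norm_sum[OF p]) simp
        also have "\<dots> \<le> (\<Sum>i = 1..q. opn i * n (\<tau> - int i))"
          unfolding opn_def n_def by (intro sum_mono opnorm_le[OF p])
        finally show ?thesis .
      qed
      ultimately show ?thesis unfolding mem_cost_def P_def Z_def n_def lp_norm_neg by linarith
    qed
    have shift: "(\<Sum>\<tau> = 1..int T. n (\<tau> - int i)) \<le> N" if "i \<in> {1..q}" for i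
      unfolding N_def by (rule shift_sum[OF nn n0]) (use that in auto)
    have "(\<Sum>\<tau> = 1..int T. \<Sum>i = 1..q. opn i * n (\<tau> - int i))
        = (\<Sum>i = 1..q. opn i * (\<Sum>\<tau> = 1..int T. n (\<tau> - int i)))"
      by (subst sum.swap) (simp add: sum_distrib_left)
    also have "\<dots> \<le> (\<Sum>i = 1..q. opn i * N)"
      by (intro sum_mono mult_left_mono shift opn_nn)
    also have "\<dots> = beta * N" unfolding beta_def by (simp add: sum_distrib_right)
    finally have sw: "(\<Sum>\<tau> = 1..int T. \<Sum>i = 1..q. opn i * n (\<tau> - int i)) \<le> beta * N" .
    have "Mp \<le> (\<Sum>\<tau> = 1..int T. mem_cost p C q z \<tau> (z \<tau>) + n \<tau> + (\<Sum>i = 1..q. opn i * n (\<tau> - int i)))"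
      unfolding Mp_def by (intro sum_mono memle)
    also have "\<dots> = Mz + N + (\<Sum>\<tau> = 1..int T. \<Sum>i = 1..q. opn i * n (\<tau> - int i))"
      unfolding Mz_def N_def by (simp add: sum.distrib)
    finally have "Mp \<le> Mz + (beta + 1) * N" using sw by (simp add: algebra_simps)
    also have "(beta + 1) * N \<le> (beta + 1) * ((Fz - F) / \<alpha>)"
      using NFz beta_nn by (intro mult_left_mono) auto
    also have "\<dots> = c * (Fz - F)" unfolding c_def by simp
    also have "c * (Fz - F) \<le> M * (Fz - F)" using M1 D by (intro mult_right_mono) auto
    finally have MpB: "Mp \<le> Mz + M * (Fz - F)" by simp
    have "seq_cost f p C q xpi y (int T) = F + Mp" unfolding seq_cost_def F_def Mp_def by (simp add: sum.distrib)
    moreover have "seq_cost f p C q z y (int T) = Fz + Mz" unfolding seq_cost_def Fz_def Mz_def by (simp add: sum.distrib)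
    moreover have "F + Mp \<le> M * (Fz + Mz)"
    proof -
      have "F + Mp \<le> (1 - M) * F + M * Fz + Mz" using MpB by (simp add: algebra_simps)
      also have "\<dots> \<le> M * Fz + M * Mz"
      proof -
        have "(1 - M) * F \<le> 0" using M1 F_nn by (intro mult_nonpos_nonneg) auto
        moreover have "(M - 1) * Mz \<ge> 0" using M1 Mz_nn by simp
        ultimately show ?thesis by (simp add: algebra_simps)
      qed
      finally show ?thesis by (simp add: algebra_simps)
    qed
    ultimately show ?thesis by simp
  qed
  define S where "S = {seq_cost f p C q z y (int T) | z.
     (\<forall>t\<in>{1..int T}. z t \<in> X) \<and> (\<forall>t. 1 - int q \<le> t \<and> t \<le> 0 \<longrightarrow> z t = x0 t)}"
  have xpiS: "seq_cost f p C q xpi y (int T) \<in> S"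
    unfolding S_def using xpi_min xpi_init unfolding is_minimizer_def by blast
  have "seq_cost f p C q xpi y (int T) / M \<le> Inf S"
  proof (rule cInf_greatest)
    show "S \<noteq> {}" using xpiS by blast
    fix s assume "s \<in> S"
    then obtain z where "s = seq_cost f p C q z y (int T)" "\<forall>t\<in>{1..int T}. z t \<in> X"
      "\<forall>t. 1 - int q \<le> t \<and> t \<le> 0 \<longrightarrow> z t = x0 t" unfolding S_def by blast
    then show "seq_cost f p C q xpi y (int T) / M \<le> s" using ROB M1 by (simp add: divide_le_eq mult.commute)
  qed
  then have OPT: "seq_cost f p C q xpi y (int T) \<le> M * opt_cost X f p C q T y x0"
    using M1 unfolding opt_cost_def S_def[symmetric] by (simp add: divide_le_eq mult.commute)
  have "lam * seq_cost f p C q xpi y (int T) \<le> lam * (M * opt_cost X f p C q T y x0)"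
    using OPT lam by (intro mult_left_mono) auto
  then show ?thesis using ERL unfolding M_def c_def beta_def opn_def by (simp add: mult.assoc)
qed


end
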